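(* Let $k\ge0$ and let $\eta$ be a Borel probability measure on $I^{\mathbb Z}$ invariant under $\mathbb S^{2^k}$. Then $D_k[\eta]$ is ergodic with respect to $\mathbb S\times\mathbb O$ if and only if $\eta$ is ergodic with respect to $\mathbb S^{2^{k+1}}$.
   Context: $I=\{0,1\}$. $\mathbb S$ is the left shift on $I^{\mathbb Z}$; $\mathbb S^j\eta$ denotes the pushforward of $\eta$. $I^{\mathbb N}$ is the space of $0$–$1$ sequences $(\alpha_i)_{i\ge1}$ with uniform Bernoulli measure $m$; $\mathbb O$ is the odometer (if $\alpha_1=\dots=\alpha_{n-1}=1$, $\alpha_n=0$, then $\mathbb O[\alpha]_i=0$ for $i<n$, $\mathbb O[\alpha]_n=1$, $\mathbb O[\alpha]_i=\alpha_i$ for $i>n$). For $0\le r\le2^k-1$, $A_{r,k}=\{\alpha:\sum_{i=1}^k\alpha_i2^{i-1}=r\}$. For an $\mathbb S^{2^k}$-invariant $\eta$, the measure of periodic type with base $\eta$ is $D_k[\eta]=\sum_{i=0}^{2^k-1}\mathbb S^i\eta\times(\chi_{A_{i,k}}m)$, a Borel probability measure on $I^{\mathbb Z}\times I^{\mathbb N}$ invariant under $\mathbb S\times\mathbb O$. *)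

theory Defs
  imports "HOL-Probability.Probability"
begin

text \<open>The space I^Z of two-sided 0-1 sequences (True = 1), with the product
  sigma-algebra (= Borel sigma-algebra of the product topology).\<close>
definition seqZ :: "(int \<Rightarrow> bool) measure" where
  "seqZ = PiM UNIV (\<lambda>_::int. count_space (UNIV :: bool set))"

definition shiftZ :: "(int \<Rightarrow> bool) \<Rightarrow> (int \<Rightarrow> bool)" where
  "shiftZ x = (\<lambda>i. x (i + 1))"

text \<open>The space I^N of one-sided sequences, with uniform Bernoulli measure m.
  Coordinate alpha_i (i \<ge> 1) of the paper is stored at index i - 1.\<close>
definition bernoulliN :: "(nat \<Rightarrow> bool) measure" where
  "bernoulliN = PiM UNIV (\<lambda>_::nat. measure_pmf (bernoulli_pmf (1/2)))"

text \<open>The odometer (adding 1 with carry to the right). On the null sequence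
  of all ones it is defined to give the all-zero sequence.\<close>
definition odometer :: "(nat \<Rightarrow> bool) \<Rightarrow> (nat \<Rightarrow> bool)" where
  "odometer a = (if (\<forall>i. a i) then (\<lambda>_. False)
     else (let n = (LEAST n. \<not> a n) in
           (\<lambda>i. if i < n then False else if i = n then True else a i)))"

definition cylA :: "nat \<Rightarrow> nat \<Rightarrow> (nat \<Rightarrow> bool) set" where
  "cylA r k = {a. (\<Sum>i<k. (if a i then 2 ^ i else 0)) = r}"

definition shift_push :: "nat \<Rightarrow> (int \<Rightarrow> bool) measure \<Rightarrow> (int \<Rightarrow> bool) measure" where
  "shift_push j \<eta> = distr \<eta> seqZ (shiftZ ^^ j)"

definition periodic_type :: "nat \<Rightarrow> (int \<Rightarrow> bool) measure \<Rightarrow> ((int \<Rightarrow> bool) \<times> (nat \<Rightarrow> bool)) measure" where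
  "periodic_type k \<eta> =
     measure_of (space (seqZ \<Otimes>\<^sub>M bernoulliN)) (sets (seqZ \<Otimes>\<^sub>M bernoulliN))
       (\<lambda>B. \<Sum>i<2^k. emeasure (shift_push i \<eta> \<Otimes>\<^sub>M density bernoulliN (indicator (cylA i k))) B)"

definition ergodic :: "'a measure \<Rightarrow> ('a \<Rightarrow> 'a) \<Rightarrow> bool" where
  "ergodic M T \<longleftrightarrow> T \<in> M \<rightarrow>\<^sub>M M \<and> distr M M T = M \<and>
     (\<forall>A \<in> sets M. T -` A \<inter> space M = A \<longrightarrow> emeasure M A = 0 \<or> emeasure M A = 1)"

end

theory Submission
  imports Defs
begin


definition num :: "nat \<Rightarrow> (nat \<Rightarrow> bool) \<Rightarrow> nat" where
  "num j a = (\<Sum>i<j. (if a i then 2 ^ i else 0))"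

lemma cylA_num: "cylA r j = {a. num j a = r}"
  by (simp add: cylA_def num_def)

lemma num_Suc: "num (Suc j) a = num j a + (if a j then 2 ^ j else 0)"
  by (simp add: num_def)

lemma num_0[simp]: "num 0 a = 0" by (simp add: num_def)

lemma num_lt: "num j a < 2 ^ j"
  by (induction j) (auto simp: num_Suc)

lemma num_mod: "k \<le> j \<Longrightarrow> num j a mod 2 ^ k = num k a"
proof (induction j)
  case 0 then show ?case by simp
next
  case (Suc j)
  show ?case
  proof (cases "k = Suc j")
    case True then show ?thesis using num_lt[of "Suc j" a] by simp
  next
    case False
    then have "k \<le> j" using Suc by simp
    have d: "(2::nat) ^ k dvd 2 ^ j" using \<open>k \<le> j\<close> by (simp add: le_imp_power_dvd)
    have "num (Suc j) a mod 2 ^ k = (num j a + (if a j then 2 ^ j else 0)) mod 2 ^ k"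
      by (simp add: num_Suc)
    also have "\<dots> = num j a mod 2 ^ k" using d by (auto simp: mod_add_right_eq[symmetric])
    finally show ?thesis using Suc.IH \<open>k \<le> j\<close> by simp
  qed
qed

lemma num_eq_iff: "num j a = r \<longleftrightarrow> r < 2 ^ j \<and> (\<forall>i<j. a i = bit r i)"
proof (induction j arbitrary: r)
  case 0 then show ?case by simp
next
  case (Suc j)
  have lt: "num j a < 2 ^ j" by (rule num_lt)
  show ?case
  proof
    assume h: "num (Suc j) a = r"
    have r1: "r mod 2 ^ j = num j a" using h num_mod[of j "Suc j" a] by simp
    have r2: "r div 2 ^ j = (if a j then 1 else 0)" using h lt by (auto simp: num_Suc)
    have "r < 2 ^ Suc j" using h num_lt by blast
    moreover have "\<forall>i<Suc j. a i = bit r i"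
    proof (intro allI impI)
      fix i assume "i < Suc j"
      show "a i = bit r i"
      proof (cases "i = j")
        case True then show ?thesis using r2 by (auto simp: bit_iff_odd)
      next
        case False
        then have "i < j" using \<open>i < Suc j\<close> by simp
        have "a i = bit (r mod 2 ^ j) i" using Suc.IH[of "r mod 2 ^ j"] r1 \<open>i < j\<close> by simp
        then show ?thesis using \<open>i < j\<close> by (simp add: bit_take_bit_iff take_bit_eq_mod[symmetric])
      qed
    qed
    ultimately show "r < 2 ^ Suc j \<and> (\<forall>i<Suc j. a i = bit r i)" by blast
  next
    assume h: "r < 2 ^ Suc j \<and> (\<forall>i<Suc j. a i = bit r i)"
    have "\<forall>i<j. a i = bit (r mod 2 ^ j) i"
      using h by (simp add: bit_take_bit_iff take_bit_eq_mod[symmetric])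
    then have n: "num j a = r mod 2 ^ j" using Suc.IH[of "r mod 2 ^ j"] by simp
    have "r div 2 ^ j < 2" using h by (simp add: div_less_iff_less_mult mult.commute)
    then have "r div 2 ^ j = 0 \<or> r div 2 ^ j = 1" by linarith
    then have "r div 2 ^ j = (if bit r j then 1 else 0)" by (auto simp: bit_iff_odd)
    then have "r div 2 ^ j = (if a j then 1 else 0)" using h by auto
    then have "r = num j a + (if a j then 2 ^ j else 0)"
      using n div_mult_mod_eq[of r "2^j"] by (auto split: if_splits)
    then show "num (Suc j) a = r" by (simp add: num_Suc)
  qed
qed

lemma num_split: "m \<le> j \<Longrightarrow> num j a = num m a + (\<Sum>i\<in>{m..<j}. (if a i then 2 ^ i else 0))"
  unfolding num_def by (metis (no_types, lifting) lessThan_atLeast0 sum.atLeastLessThan_concat zero_le)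

lemma num_all: "(\<forall>i<j. a i) \<Longrightarrow> num j a = 2 ^ j - 1"
  by (induction j) (auto simp: num_Suc)

lemma num_none: "(\<forall>i<j. \<not> a i) \<Longrightarrow> num j a = 0"
  by (induction j) (auto simp: num_Suc)

lemma num_odometer: "num j (odometer a) = (num j a + 1) mod 2 ^ j"
proof (cases "\<forall>i. a i")
  case True
  then have "num j a = 2 ^ j - 1" by (simp add: num_all)
  moreover have "num j (odometer a) = 0" using True by (simp add: odometer_def num_none)
  ultimately show ?thesis by simp
next
  case False
  define n where "n = (LEAST n. \<not> a n)"
  have an: "\<not> a n" unfolding n_def using False by (metis LeastI)
  have bel: "\<forall>i<n. a i" unfolding n_def using not_less_Least by blast
  have O: "odometer a = (\<lambda>i. if i < n then False else if i = n then True else a i)"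
    unfolding odometer_def n_def Let_def by (simp only: if_not_P[OF False])
  show ?thesis
  proof (cases "j \<le> n")
    case True
    have "num j a = 2 ^ j - 1" using bel True by (simp add: num_all)
    moreover have "num j (odometer a) = 0" using True by (simp add: O num_none)
    ultimately show ?thesis by simp
  next
    case False
    then have le: "Suc n \<le> j" by simp
    have t: "(\<Sum>i\<in>{Suc n..<j}. (if odometer a i then 2 ^ i else 0)) = (\<Sum>i\<in>{Suc n..<j}. (if a i then (2::nat) ^ i else 0))"
      by (rule sum.cong) (auto simp: O)
    have "num (Suc n) (odometer a) = 2 ^ n" by (simp add: num_Suc O num_none)
    moreover have "num (Suc n) a = 2 ^ n - 1" using an bel by (simp add: num_Suc num_all)
    ultimately have "num j (odometer a) = num j a + 1"
      using num_split[OF le, of a] num_split[OF le, of "odometer a"] t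
      by (simp add: algebra_simps)
    moreover have "num j (odometer a) < 2 ^ j" by (rule num_lt)
    ultimately show ?thesis by simp
  qed
qed

lemma num_odometer_pow: "num j ((odometer ^^ n) a) = (num j a + n) mod 2 ^ j"
  by (induction n) (simp_all add: num_odometer mod_Suc_eq num_lt)



lemma space_bernoulliN[simp]: "space bernoulliN = UNIV"
  by (simp add: bernoulliN_def space_PiM PiE_UNIV_domain)

lemma space_seqZ[simp]: "space seqZ = UNIV"
  by (simp add: seqZ_def space_PiM PiE_UNIV_domain)

lemma prob_space_bernoulliN: "prob_space bernoulliN"
  unfolding bernoulliN_def by (intro prob_space_PiM) (simp add: prob_space_measure_pmf)

lemma cylA_eq: "cylA r j = (if r < 2 ^ j then {a. \<forall>i<j. a i = bit r i} else {})"
  unfolding cylA_num using num_eq_iff by auto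

lemma cyl_prod_emb: "{a. \<forall>i<j. a i = bit r i} = prod_emb UNIV (\<lambda>_. measure_pmf (bernoulli_pmf (1/2))) {..<j} (Pi\<^sub>E {..<j} (\<lambda>i. {bit r i}))"
proof -
  have "prod_emb UNIV (\<lambda>_. measure_pmf (bernoulli_pmf (1/2))) {..<j} (Pi\<^sub>E {..<j} (\<lambda>i. {bit r i}))
     = Pi\<^sub>E UNIV (\<lambda>i. if i \<in> {..<j} then {bit r i} else space (measure_pmf (bernoulli_pmf (1/2))))"
    by (rule prod_emb_PiE) auto
  then show ?thesis by (simp only:) (auto simp: PiE_UNIV_domain Pi_iff split: if_splits)
qed

lemma cylA_sets[measurable]: "cylA r j \<in> sets bernoulliN"
proof -
  have "prod_emb UNIV (\<lambda>_. measure_pmf (bernoulli_pmf (1/2))) {..<j} (Pi\<^sub>E {..<j} (\<lambda>i. {bit r i})) \<in> sets bernoulliN"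
    unfolding bernoulliN_def by (intro sets_PiM_I) auto
  then show ?thesis by (simp add: cylA_eq cyl_prod_emb)
qed
lemma emeasure_cylA: "emeasure bernoulliN (cylA r j) = (if r < 2 ^ j then ennreal ((1/2) ^ j) else 0)"
proof (cases "r < 2 ^ j")
  case True
  have C: "cylA r j = prod_emb UNIV (\<lambda>_. measure_pmf (bernoulli_pmf (1/2))) {..<j} (Pi\<^sub>E {..<j} (\<lambda>i. {bit r i}))"
    using True by (simp add: cylA_eq cyl_prod_emb)
  have "emeasure bernoulliN (cylA r j) = (\<Prod>i\<in>{..<j}. emeasure (measure_pmf (bernoulli_pmf (1/2))) {bit r i})"
    unfolding C bernoulliN_def by (rule emeasure_PiM_emb) (auto simp: prob_space_measure_pmf)
  also have "\<dots> = (\<Prod>i\<in>{..<j}. ennreal (1/2))"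
    by (intro prod.cong refl) (simp add: emeasure_pmf_single)
  also have "\<dots> = ennreal ((1/2) ^ j)" by (simp add: ennreal_power[symmetric])
  finally show ?thesis using True by simp
qed (simp add: cylA_eq)

lemma set_num_pred: "{a. P (num j a)} = (\<Union>s\<in>{s. s < 2 ^ j \<and> P s}. cylA s j)"
  using num_lt by (auto simp: cylA_num)

lemma num_pred_sets: "{a. P (num j a)} \<in> sets bernoulliN"
  unfolding set_num_pred by (intro sets.finite_UN) (auto simp: cylA_sets)

definition Gen :: "nat \<Rightarrow> (nat \<Rightarrow> bool) set set" where
  "Gen k = {cylA r j | r j. k \<le> j}"

lemma Gen_Int_stable: "Int_stable (Gen k)"
  unfolding Int_stable_def
proof (intro ballI)
  fix X Y assume "X \<in> Gen k" "Y \<in> Gen k"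
  then obtain r j r' j' where X: "X = cylA r j" "k \<le> j" and Y: "Y = cylA r' j'" "k \<le> j'"
    by (auto simp: Gen_def)
  have *: "cylA r j \<inter> cylA r' j' = (if r' mod 2 ^ j = r then cylA r' j' else cylA (2 ^ j') j')"
    if "j \<le> j'" for r j r' j'
  proof -
    have "\<forall>a. num j' a \<noteq> 2 ^ j'" using num_lt by (metis less_irrefl)
    then show ?thesis using that num_mod[OF that] by (auto simp: cylA_num)
  qed
  have G1: "cylA r' j' \<in> Gen k" "cylA (2^j') j' \<in> Gen k" "cylA r j \<in> Gen k" "cylA (2^j) j \<in> Gen k"
    using X(2) Y(2) unfolding Gen_def by blast+
  show "X \<inter> Y \<in> Gen k"
  proof (cases "j \<le> j'")
    case True then show ?thesis using *[OF True, of r r'] X Y G1 by simp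
  next
    case False then have "j' \<le> j" by simp
    then show ?thesis using *[OF \<open>j' \<le> j\<close>, of r' r] X Y G1 by (simp add: Int_commute)
  qed
qed

lemma sets_bernoulliN_Gen: "sets bernoulliN = sigma_sets UNIV (Gen k)"
proof -
  have s: "sets bernoulliN = sigma_sets UNIV {{f. f i \<in> A} | (i::nat) A. A \<in> (UNIV :: bool set set)}"
    unfolding bernoulliN_def sets_PiM_single by (simp add: PiE_UNIV_domain)
  show ?thesis unfolding s
  proof (rule sigma_sets_eqI)
    fix X assume "X \<in> {{f. f i \<in> A} | (i::nat) A. A \<in> (UNIV :: bool set set)}"
    then obtain i A where X: "X = {f. f i \<in> A}" by auto
    define J where "J = max k (Suc i)"
    have "X = (\<Union>s\<in>{s. s < 2 ^ J \<and> bit s i \<in> A}. cylA s J)"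
      unfolding X
    proof safe
      fix f assume "f i \<in> A"
      moreover have "f i = bit (num J f) i" using num_eq_iff[of J f "num J f"] by (simp add: J_def)
      ultimately show "f \<in> (\<Union>s\<in>{s. s < 2 ^ J \<and> bit s i \<in> A}. cylA s J)"
        using num_lt by (auto simp: cylA_num)
    next
      fix f s assume "f \<in> cylA s J" "s < 2 ^ J" "bit s i \<in> A"
      then have "f i = bit s i" using num_eq_iff[of J f s] by (simp add: cylA_num J_def)
      then show "f i \<in> A" using \<open>bit s i \<in> A\<close> by simp
    qed
    moreover have "(\<Union>s\<in>{s. s < 2 ^ J \<and> bit s i \<in> A}. cylA s J) \<in> sigma_sets UNIV (Gen k)"
    proof -
      interpret S: sigma_algebra UNIV "sigma_sets UNIV (Gen k)" by (rule sigma_algebra_sigma_sets) simp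
      have "\<And>s. cylA s J \<in> sigma_sets UNIV (Gen k)"
      proof -
        fix s
        have "k \<le> J" by (simp add: J_def)
        then have "cylA s J \<in> Gen k" unfolding Gen_def by blast
        then show "cylA s J \<in> sigma_sets UNIV (Gen k)" by (rule sigma_sets.Basic)
      qed
      then show ?thesis by (intro S.finite_UN) auto
    qed
    ultimately show "X \<in> sigma_sets UNIV (Gen k)" by simp
  next
    fix X assume "X \<in> Gen k"
    then have "X \<in> sets bernoulliN" by (auto simp: Gen_def)
    then show "X \<in> sigma_sets UNIV {{f. f i \<in> A} | (i::nat) A. A \<in> (UNIV :: bool set set)}" using s by simp
  qed
qed

lemma odometer_pow_vimage: "(odometer ^^ n) -` {a. P (num j a)} = {a. P ((num j a + n) mod 2 ^ j)}"
  by (auto simp: num_odometer_pow)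

lemma odometer_pow_measurable[measurable]: "(odometer ^^ n) \<in> bernoulliN \<rightarrow>\<^sub>M bernoulliN"
proof (rule measurable_sigma_sets[OF sets_bernoulliN_Gen[of 0]])
  show "Gen 0 \<subseteq> Pow UNIV" by simp
  show "(odometer ^^ n) \<in> space bernoulliN \<rightarrow> UNIV" by simp
  fix y assume "y \<in> Gen 0"
  then obtain r j where y: "y = cylA r j" by (auto simp: Gen_def)
  show "(odometer ^^ n) -` y \<inter> space bernoulliN \<in> sets bernoulliN"
    unfolding y cylA_num using odometer_pow_vimage[of n "\<lambda>x. x = r" j] num_pred_sets[of "\<lambda>x. (x+n) mod 2^j = r" j] by simp
qed

lemma odometer_measurable[measurable]: "odometer \<in> bernoulliN \<rightarrow>\<^sub>M bernoulliN"
  using odometer_pow_measurable[of 1] by simp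

lemma mod_shift_eq: "x < (N::nat) \<Longrightarrow> r < N \<Longrightarrow> (x + n) mod N = (r + n) mod N \<longleftrightarrow> x = r"
proof
  assume a: "x < N" "r < N" "(x + n) mod N = (r + n) mod N"
  define m where "m = n mod N"
  have m: "m < N" using a unfolding m_def by simp
  have e: "(x + m) mod N = (r + m) mod N" using a(3) unfolding m_def by (metis mod_add_right_eq)
  have f: "\<And>y. y < N \<Longrightarrow> (y + m) mod N = (if y + m < N then y + m else y + m - N)"
    using m by (simp add: mod_if)
  show "x = r" using e f[OF a(1)] f[OF a(2)] a m by (auto split: if_splits)
qed simp

lemma odometer_pow_preserves: "distr bernoulliN bernoulliN (odometer ^^ n) = bernoulliN"
proof (rule measure_eqI_generator_eq[OF Gen_Int_stable[of 0], where \<Omega>=UNIV and A="\<lambda>_. UNIV"])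
  show "Gen 0 \<subseteq> Pow UNIV" by simp
  show "sets (distr bernoulliN bernoulliN (odometer ^^ n)) = sigma_sets UNIV (Gen 0)"
    using sets_bernoulliN_Gen by simp
  show "sets bernoulliN = sigma_sets UNIV (Gen 0)" by (rule sets_bernoulliN_Gen)
  have U: "UNIV = cylA 0 0" by (simp add: cylA_num)
  show "range (\<lambda>_. UNIV) \<subseteq> Gen 0" by (subst U) (auto simp: Gen_def)
  show "(\<Union>i. UNIV) = UNIV" by simp
  show "emeasure (distr bernoulliN bernoulliN (odometer ^^ n)) UNIV \<noteq> \<infinity>"
    using prob_space.emeasure_space_1[OF prob_space_bernoulliN] sets.top[of bernoulliN]
    by (simp add: emeasure_distr)
  fix X assume "X \<in> Gen 0"
  then obtain r j where X: "X = cylA r j" by (auto simp: Gen_def)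
  show "emeasure (distr bernoulliN bernoulliN (odometer ^^ n)) X = emeasure bernoulliN X"
  proof (cases "r < 2 ^ j")
    case True
    define r' where "r' = (r + (2 ^ j - n mod 2 ^ j)) mod 2 ^ j"
    have r': "r' < 2 ^ j" unfolding r'_def by simp
    have rr: "(r' + n) mod 2 ^ j = r"
    proof -
      have m: "n mod 2 ^ j < 2 ^ j" by simp
      have "(r' + n) mod 2 ^ j = (r' + n mod 2 ^ j) mod 2 ^ j" by (rule mod_add_right_eq[symmetric])
      also have "\<dots> = (r + (2 ^ j - n mod 2 ^ j) + n mod 2 ^ j) mod 2 ^ j" unfolding r'_def by (rule mod_add_left_eq)
      also have "\<dots> = (r + 2 ^ j) mod 2 ^ j" using m by (simp del: mod_less_divisor)
      also have "\<dots> = r" using True by simp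
      finally show ?thesis .
    qed
    have "(odometer ^^ n) -` X = {a. (num j a + n) mod 2^j = r}"
      using odometer_pow_vimage[of n "\<lambda>x. x = r" j] by (simp add: X cylA_num)
    also have "\<dots> = cylA r' j" unfolding cylA_num
    proof (intro Collect_cong)
      fix a show "(num j a + n) mod 2 ^ j = r \<longleftrightarrow> num j a = r'"
        by (subst rr[symmetric]) (rule mod_shift_eq[OF num_lt r'])
    qed
    finally have V: "(odometer ^^ n) -` X = cylA r' j" .
    have "emeasure (distr bernoulliN bernoulliN (odometer ^^ n)) X = emeasure bernoulliN ((odometer ^^ n) -` X \<inter> space bernoulliN)"
      by (rule emeasure_distr[OF odometer_pow_measurable]) (simp add: X cylA_sets)
    also have "\<dots> = emeasure bernoulliN (cylA r' j)" using V by simp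
    also have "\<dots> = emeasure bernoulliN X" using True r' by (simp add: X emeasure_cylA)
    finally show ?thesis .
  next
    case False
    then have "X = {}" by (simp add: X cylA_eq)
    then show ?thesis by (simp add: emeasure_distr)
  qed
qed



lemma shift_pow: "(shiftZ ^^ n) x = (\<lambda>i. x (i + int n))"
  by (induction n arbitrary: x) (auto simp: shiftZ_def algebra_simps)

lemma shift_pow_fun: "shiftZ ^^ n = (\<lambda>x i. x (i + int n))"
  by (rule ext) (simp add: shift_pow)

definition unshift :: "nat \<Rightarrow> (int \<Rightarrow> bool) \<Rightarrow> (int \<Rightarrow> bool)" where
  "unshift n x = (\<lambda>i. x (i - int n))"

lemma shift_unshift[simp]: "(shiftZ ^^ n) (unshift n x) = x"
  by (simp add: shift_pow unshift_def)

lemma unshift_shift[simp]: "unshift n ((shiftZ ^^ n) x) = x"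
  by (simp add: shift_pow unshift_def)

lemma shift_pow_measurable[measurable]: "(shiftZ ^^ n) \<in> seqZ \<rightarrow>\<^sub>M seqZ"
  unfolding shift_pow_fun seqZ_def
  by (rule measurable_PiM_single') (auto simp: space_PiM)

lemma shift_measurable[measurable]: "shiftZ \<in> seqZ \<rightarrow>\<^sub>M seqZ"
  using shift_pow_measurable[of 1] by simp

lemma unshift_measurable[measurable]: "unshift n \<in> seqZ \<rightarrow>\<^sub>M seqZ"
  unfolding unshift_def[abs_def] seqZ_def
  by (rule measurable_PiM_single') (auto simp: space_PiM)

lemma T_pow: fixes f :: "'a \<Rightarrow> 'a" and g :: "'b \<Rightarrow> 'b"
  shows "(map_prod f g ^^ n) (x, y) = ((f ^^ n) x, (g ^^ n) y)"
proof (induction n)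
  case 0 show ?case by simp
next
  case (Suc n) then show ?case by simp
qed

lemma UNIV_seqZ[simp]: "UNIV \<in> sets seqZ"
  using sets.top[of seqZ] by simp

lemma UNIV_bernoulliN[simp]: "UNIV \<in> sets bernoulliN"
  using sets.top[of bernoulliN] by simp

lemma cyl_vimage_O: "r < 2 ^ j \<Longrightarrow> (odometer ^^ n) -` cylA ((r + n) mod 2 ^ j) j = cylA r j"
  unfolding cylA_num using mod_shift_eq[OF num_lt] by (auto simp: num_odometer_pow)

lemma emeasure_O_vimage: "B \<in> sets bernoulliN \<Longrightarrow>
    emeasure bernoulliN ((odometer ^^ n) -` B) = emeasure bernoulliN B"
proof -
  assume B: "B \<in> sets bernoulliN"
  have "emeasure (distr bernoulliN bernoulliN (odometer ^^ n)) B = emeasure bernoulliN ((odometer ^^ n) -` B \<inter> space bernoulliN)"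
    by (rule emeasure_distr[OF odometer_pow_measurable B])
  then show ?thesis using odometer_pow_preserves by simp
qed

lemma section_G:
  assumes A: "A \<in> sets (seqZ \<Otimes>\<^sub>M bernoulliN)" and r: "r < 2 ^ j"
  shows "emeasure bernoulliN (Pair x -` ((map_prod shiftZ odometer ^^ n) -` A) \<inter> cylA r j)
       = emeasure bernoulliN (Pair ((shiftZ ^^ n) x) -` A \<inter> cylA ((r + n) mod 2 ^ j) j)"
proof -
  have S: "Pair x -` ((map_prod shiftZ odometer ^^ n) -` A) \<inter> cylA r j
      = (odometer ^^ n) -` (Pair ((shiftZ ^^ n) x) -` A \<inter> cylA ((r + n) mod 2 ^ j) j)"
    using cyl_vimage_O[OF r, of n] by (auto simp: T_pow)
  moreover have "Pair ((shiftZ ^^ n) x) -` A \<inter> cylA ((r + n) mod 2 ^ j) j \<in> sets bernoulliN"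
    using sets_Pair1[OF A] cylA_sets by blast
  then show ?thesis unfolding S by (rule emeasure_O_vimage)
qed

lemma sets_prodD[simp]: "sets (periodic_type k \<eta>) = sets (seqZ \<Otimes>\<^sub>M bernoulliN)"
  unfolding periodic_type_def by (rule sets.sets_measure_of_eq)

lemma space_prodD[simp]: "space (periodic_type k \<eta>) = space (seqZ \<Otimes>\<^sub>M bernoulliN)"
  using sets_eq_imp_space_eq[OF sets_prodD] by simp

lemma space_prod_UNIV[simp]: "space (seqZ \<Otimes>\<^sub>M bernoulliN) = UNIV"
  by (simp add: space_pair_measure)

lemma measurable_eta:
  assumes "sets \<eta> = sets seqZ" "f \<in> seqZ \<rightarrow>\<^sub>M N"
  shows "f \<in> \<eta> \<rightarrow>\<^sub>M N"
  using assms measurable_cong_sets by blast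

lemma finite_measure_mi: "finite_measure (density bernoulliN (indicator (cylA i k)))"
  using prob_space_bernoulliN by (intro finite_measure.finite_measure_restricted) (auto simp: prob_space_def cylA_sets)

lemma D_emeasure:
  assumes eta: "prob_space \<eta>" "sets \<eta> = sets seqZ" and A: "A \<in> sets (seqZ \<Otimes>\<^sub>M bernoulliN)"
  shows "emeasure (periodic_type k \<eta>) A =
    (\<Sum>i<2^k. \<integral>\<^sup>+ y. emeasure bernoulliN (Pair ((shiftZ ^^ i) y) -` A \<inter> cylA i k) \<partial>\<eta>)"
proof -
  let ?mu = "\<lambda>i. shift_push i \<eta> \<Otimes>\<^sub>M density bernoulliN (indicator (cylA i k))"
  have sets_mu: "sets (?mu i) = sets (seqZ \<Otimes>\<^sub>M bernoulliN)" for i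
    unfolding shift_push_def by (intro sets_pair_measure_cong) auto
  have "emeasure (periodic_type k \<eta>) A = (\<Sum>i<2^k. emeasure (?mu i) A)"
    unfolding periodic_type_def
  proof (rule emeasure_measure_of_sigma)
    show "sigma_algebra (space (seqZ \<Otimes>\<^sub>M bernoulliN)) (sets (seqZ \<Otimes>\<^sub>M bernoulliN))"
      by (rule sets.sigma_algebra_axioms)
    show "positive (sets (seqZ \<Otimes>\<^sub>M bernoulliN)) (\<lambda>B. \<Sum>i<2^k. emeasure (?mu i) B)"
      by (simp add: positive_def)
    show "countably_additive (sets (seqZ \<Otimes>\<^sub>M bernoulliN)) (\<lambda>B. \<Sum>i<2^k. emeasure (?mu i) B)"
      unfolding countably_additive_def
    proof (intro allI impI)
      fix F :: "nat \<Rightarrow> _" assume F: "range F \<subseteq> sets (seqZ \<Otimes>\<^sub>M bernoulliN)" "disjoint_family F"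
      have "(\<Sum>n. \<Sum>i<2^k. emeasure (?mu i) (F n)) = (\<Sum>i<2^k. \<Sum>n. emeasure (?mu i) (F n))"
        by (rule suminf_sum) (rule summableI)
      also have "\<dots> = (\<Sum>i<2^k. emeasure (?mu i) (\<Union>n. F n))"
        using F sets_mu by (intro sum.cong refl suminf_emeasure) auto
      finally show "(\<Sum>n. \<Sum>i<2^k. emeasure (?mu i) (F n)) = (\<Sum>i<2^k. emeasure (?mu i) (\<Union>n. F n))" .
    qed
  qed (rule A)
  also have "\<dots> = (\<Sum>i<2^k. \<integral>\<^sup>+ y. emeasure bernoulliN (Pair ((shiftZ ^^ i) y) -` A \<inter> cylA i k) \<partial>\<eta>)"
  proof (rule sum.cong[OF refl])
    fix i
    interpret mi: finite_measure "density bernoulliN (indicator (cylA i k))" by (rule finite_measure_mi)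
    have A': "A \<in> sets (shift_push i \<eta> \<Otimes>\<^sub>M density bernoulliN (indicator (cylA i k)))"
      using A sets_mu by simp
    have "emeasure (?mu i) A = \<integral>\<^sup>+ x. emeasure (density bernoulliN (indicator (cylA i k))) (Pair x -` A) \<partial>(shift_push i \<eta>)"
      by (rule mi.emeasure_pair_measure_alt[OF A'])
    also have "\<dots> = \<integral>\<^sup>+ x. emeasure bernoulliN (Pair x -` A \<inter> cylA i k) \<partial>(shift_push i \<eta>)"
      using sets_Pair1[OF A] by (intro nn_integral_cong) (simp add: emeasure_restricted cylA_sets Int_commute)
    also have "\<dots> = \<integral>\<^sup>+ y. emeasure bernoulliN (Pair ((shiftZ ^^ i) y) -` A \<inter> cylA i k) \<partial>\<eta>"
      unfolding shift_push_def
    proof (rule nn_integral_distr)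
      show "(shiftZ ^^ i) \<in> \<eta> \<rightarrow>\<^sub>M seqZ" by (rule measurable_eta[OF eta(2) shift_pow_measurable])
      interpret B: prob_space bernoulliN by (rule prob_space_bernoulliN)
      have A2: "A \<inter> (UNIV \<times> cylA i k) \<in> sets (seqZ \<Otimes>\<^sub>M bernoulliN)"
        using A by (intro sets.Int pair_measureI) (auto simp: cylA_sets)
      have "(\<lambda>x. emeasure bernoulliN (Pair x -` (A \<inter> (UNIV \<times> cylA i k)))) \<in> borel_measurable seqZ"
        by (rule B.measurable_emeasure_Pair[OF A2])
      moreover have "\<And>x. Pair x -` (A \<inter> (UNIV \<times> cylA i k)) = Pair x -` A \<inter> cylA i k" by auto
      ultimately show "(\<lambda>x. emeasure bernoulliN (Pair x -` A \<inter> cylA i k)) \<in> borel_measurable (distr \<eta> seqZ (shiftZ ^^ i))"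
        by simp
    qed
    finally show "emeasure (?mu i) A = \<integral>\<^sup>+ y. emeasure bernoulliN (Pair ((shiftZ ^^ i) y) -` A \<inter> cylA i k) \<partial>\<eta>" .
  qed
  finally show ?thesis .
qed



lemma (in finite_measure) mUnInt:
  assumes "A \<in> sets M" "B \<in> sets M"
  shows "measure M A + measure M B = measure M (A \<union> B) + measure M (A \<inter> B)"
proof -
  have "ennreal (measure M A + measure M B) = ennreal (measure M (A \<union> B) + measure M (A \<inter> B))"
    using emeasure_Un_Int[OF assms] by (simp add: emeasure_eq_measure flip: ennreal_plus)
  then show ?thesis by (subst (asm) ennreal_inj) auto
qed

lemma erg_double:
  assumes P: "prob_space M" and sp: "space M = UNIV" and Tm: "T \<in> M \<rightarrow>\<^sub>M M"
    and pres: "distr M M T = M"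
    and E2: "\<And>A. A \<in> sets M \<Longrightarrow> (T ^^ 2) -` A = A \<Longrightarrow> measure M A = 0 \<or> measure M A = 1"
    and A: "A \<in> sets M" and A4: "(T ^^ 4) -` A = A"
  shows "measure M A = 0 \<or> measure M A = 1"
proof -
  interpret prob_space M by (rule P)
  have vs: "T -` X \<in> sets M" if "X \<in> sets M" for X
    using measurable_sets[OF Tm that] sp by simp
  have pm: "measure M (T -` X) = measure M X" if "X \<in> sets M" for X
  proof -
    have "measure (distr M M T) X = measure M (T -` X \<inter> space M)"
      by (rule measure_distr[OF Tm that])
    then show ?thesis using pres sp by simp
  qed
  have T2: "(T ^^ 2) -` X = T -` (T -` X)" for X by (auto simp: numeral_2_eq_2)
  have T4: "(T ^^ 4) -` X = T -` (T -` (T -` (T -` X)))" for X by (auto simp: numeral_eq_Suc)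
  define A2 where "A2 = T -` (T -` A)"
  define B where "B = T -` A"
  define B2 where "B2 = T -` (T -` B)"
  have sets: "A2 \<in> sets M" "B \<in> sets M" "B2 \<in> sets M"
    unfolding A2_def B_def B2_def using A vs by blast+
  have TA2: "T -` (T -` A2) = A" using A4 unfolding A2_def T4 by simp
  have TB: "T -` A2 = B2" unfolding A2_def B2_def B_def by simp
  have TB2: "T -` B2 = A" using TA2 TB by simp
  have TA: "T -` A = B" by (simp add: B_def)
  have TBB: "T -` B = A2" by (simp add: B_def A2_def)
  define W where "W = A \<union> A2"
  define Z where "Z = A \<inter> A2"
  have WZs: "W \<in> sets M" "Z \<in> sets M" unfolding W_def Z_def using A sets by auto
  have Winv: "(T ^^ 2) -` W = W" unfolding T2 W_def vimage_Un TA TBB TA2 by blast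
  have Zinv: "(T ^^ 2) -` Z = Z" unfolding T2 Z_def vimage_Int TA TBB TA2 by blast
  have mW: "measure M W = 0 \<or> measure M W = 1" by (rule E2[OF WZs(1) Winv])
  have mZ: "measure M Z = 0 \<or> measure M Z = 1" by (rule E2[OF WZs(2) Zinv])
  show ?thesis
  proof (cases "measure M Z = 1")
    case True
    have "measure M Z \<le> measure M A" unfolding Z_def using A by (intro finite_measure_mono) auto
    moreover have "measure M A \<le> 1" by simp
    ultimately show ?thesis using True by simp
  next
    case False
    then have Z0: "measure M Z = 0" using mZ by simp
    show ?thesis
    proof (cases "measure M W = 0")
      case True
      have "measure M A \<le> measure M W" unfolding W_def using WZs by (intro finite_measure_mono) (auto simp: W_def)
      then show ?thesis using True measure_nonneg[of M A] by simp
    next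
      case False
      then have W1: "measure M W = 1" using mW by simp
      define U where "U = (A \<inter> B) \<union> (A2 \<inter> B2)"
      define V where "V = (B \<inter> A2) \<union> (B2 \<inter> A)"
      have UVs: "U \<in> sets M" "V \<in> sets M" unfolding U_def V_def using A sets by auto
      have TU: "T -` U = V" unfolding U_def V_def vimage_Un vimage_Int TA TBB TB TB2 by blast
      have TV: "T -` V = U" unfolding U_def V_def vimage_Un vimage_Int TA TBB TB TB2 by blast
      have Uinv: "(T ^^ 2) -` U = U" unfolding T2 TU TV ..
      have Vinv: "(T ^^ 2) -` V = V" using Uinv TU unfolding T2 by simp
      have mU: "measure M U = measure M V" using pm[OF UVs(1)] TU by simp
      have TW: "T -` W = B \<union> B2" unfolding W_def vimage_Un TA TB ..
      have TZ: "T -` Z = B \<inter> B2" unfolding Z_def vimage_Int TA TB ..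
      have mTW: "measure M (B \<union> B2) = 1" using pm[OF WZs(1)] TW W1 by simp
      have mTZ: "measure M (B \<inter> B2) = 0" using pm[OF WZs(2)] TZ Z0 by simp
      have sub1: "U \<inter> V \<subseteq> Z \<union> (B \<inter> B2)" unfolding U_def V_def Z_def by blast
      have sub2: "(W \<inter> (B \<union> B2)) - (Z \<union> (B \<inter> B2)) \<subseteq> U \<union> V"
        unfolding U_def V_def Z_def W_def by blast
      have BBs: "B \<inter> B2 \<in> sets M" "B \<union> B2 \<in> sets M" using sets by auto
      have ZBs: "Z \<union> (B \<inter> B2) \<in> sets M" using WZs(2) BBs(1) by auto
      have UVs2: "U \<union> V \<in> sets M" "U \<inter> V \<in> sets M" using UVs by auto
      have mZB: "measure M (Z \<union> (B \<inter> B2)) = 0"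
      proof -
        have "measure M Z + measure M (B \<inter> B2) = measure M (Z \<union> (B \<inter> B2)) + measure M (Z \<inter> (B \<inter> B2))"
          by (rule mUnInt[OF WZs(2) BBs(1)])
        then show ?thesis using Z0 mTZ measure_nonneg[of M "Z \<union> (B \<inter> B2)"]
          measure_nonneg[of M "Z \<inter> (B \<inter> B2)"] by linarith
      qed
      have "measure M (U \<inter> V) \<le> measure M (Z \<union> (B \<inter> B2))"
        by (rule finite_measure_mono[OF sub1 ZBs])
      then have mUV0: "measure M (U \<inter> V) = 0"
        using mZB measure_nonneg[of M "U \<inter> V"] by linarith
      have mWB: "measure M (W \<inter> (B \<union> B2)) = 1"
      proof -
        have "measure M W + measure M (B \<union> B2) = measure M (W \<union> (B \<union> B2)) + measure M (W \<inter> (B \<union> B2))"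
          by (rule mUnInt[OF WZs(1) BBs(2)])
        moreover have "measure M (W \<union> (B \<union> B2)) \<le> 1" by (rule prob_le_1)
        moreover have "measure M (W \<inter> (B \<union> B2)) \<le> 1" by (rule prob_le_1)
        ultimately show ?thesis using W1 mTW by linarith
      qed
      have "measure M (W \<inter> (B \<union> B2)) \<le> measure M (U \<union> V) + measure M (Z \<union> (B \<inter> B2))"
      proof -
        have "W \<inter> (B \<union> B2) \<subseteq> (U \<union> V) \<union> (Z \<union> (B \<inter> B2))" using sub2 by blast
        moreover have "(U \<union> V) \<union> (Z \<union> (B \<inter> B2)) \<in> sets M" using UVs2 ZBs by blast
        ultimately have "measure M (W \<inter> (B \<union> B2)) \<le> measure M ((U \<union> V) \<union> (Z \<union> (B \<inter> B2)))"
          by (rule finite_measure_mono)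
        also have "\<dots> \<le> measure M (U \<union> V) + measure M (Z \<union> (B \<inter> B2))"
          using mUnInt[OF UVs2(1) ZBs] measure_nonneg[of M "(U \<union> V) \<inter> (Z \<union> (B \<inter> B2))"] by linarith
        finally show ?thesis .
      qed
      then have "measure M (U \<union> V) \<ge> 1" using mWB mZB by simp
      then have UV1: "measure M (U \<union> V) = 1" using prob_le_1[of "U \<union> V"] by simp
      have "measure M U + measure M V = 1" using mUnInt[OF UVs] UV1 mUV0 by linarith
      then have "measure M U = 1/2" using mU by simp
      moreover have "measure M U = 0 \<or> measure M U = 1" by (rule E2[OF UVs(1) Uinv])
      ultimately show ?thesis by simp
    qed
  qed
qed

lemma inv_const_AE:
  assumes P: "prob_space M" and sp: "space M = UNIV"
    and erg: "\<And>A. A \<in> sets M \<Longrightarrow> Q -` A = A \<Longrightarrow> measure M A = 0 \<or> measure M A = 1"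
    and g: "g \<in> borel_measurable M" "integrable M g" and inv: "\<And>x. g (Q x) = (g x :: real)"
  shows "AE x in M. g x = integral\<^sup>L M g"
proof -
  interpret prob_space M by (rule P)
  define c where "c = integral\<^sup>L M g"
  define Ap where "Ap = {x. c < g x}"
  define Am where "Am = {x. g x < c}"
  have [measurable]: "g \<in> borel_measurable M" by (rule g(1))
  have "{x\<in>space M. c < g x} \<in> sets M" by measurable
  then have Aps: "Ap \<in> sets M" unfolding Ap_def sp by simp
  have "{x\<in>space M. g x < c} \<in> sets M" by measurable
  then have Ams: "Am \<in> sets M" unfolding Am_def sp by simp
  have "measure M Ap = 0"
  proof (rule ccontr)
    assume "measure M Ap \<noteq> 0"
    then have "measure M Ap = 1" using erg[OF Aps] inv unfolding Ap_def by auto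
    then have ae: "AE x in M. x \<in> Ap" using AE_in_set_eq_1[OF Aps] by simp
    have "integral\<^sup>L M (\<lambda>_. c) < integral\<^sup>L M g"
    proof (rule integral_less_AE[where A=Ap])
      show "integrable M (\<lambda>_. c)" by simp
      show "integrable M g" by (rule g(2))
      show "emeasure M Ap \<noteq> 0" using \<open>measure M Ap = 1\<close> by (simp add: emeasure_eq_measure)
      show "Ap \<in> sets M" by (rule Aps)
      show "AE x in M. x \<in> Ap \<longrightarrow> c \<noteq> g x" by (auto simp: Ap_def)
      show "AE x in M. c \<le> g x" using ae by eventually_elim (auto simp: Ap_def)
    qed
    then show False by (simp add: c_def prob_space)
  qed
  moreover have "measure M Am = 0"
  proof (rule ccontr)
    assume "measure M Am \<noteq> 0"
    then have "measure M Am = 1" using erg[OF Ams] inv unfolding Am_def by auto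
    then have ae: "AE x in M. x \<in> Am" using AE_in_set_eq_1[OF Ams] by simp
    have "integral\<^sup>L M g < integral\<^sup>L M (\<lambda>_. c)"
    proof (rule integral_less_AE[where A=Am])
      show "integrable M (\<lambda>_. c)" by simp
      show "integrable M g" by (rule g(2))
      show "emeasure M Am \<noteq> 0" using \<open>measure M Am = 1\<close> by (simp add: emeasure_eq_measure)
      show "Am \<in> sets M" by (rule Ams)
      show "AE x in M. x \<in> Am \<longrightarrow> g x \<noteq> c" by (auto simp: Am_def)
      show "AE x in M. g x \<le> c" using ae by eventually_elim (auto simp: Am_def)
    qed
    then show False by (simp add: c_def prob_space)
  qed
  ultimately have "AE x in M. x \<notin> Ap" "AE x in M. x \<notin> Am"
    using Aps Ams by (auto intro!: AE_not_in simp: emeasure_eq_measure null_sets_def)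
  then show ?thesis by eventually_elim (auto simp: Ap_def Am_def c_def)
qed



lemma sum_cyc:
  assumes "0 < (N::nat)"
  shows "(\<Sum>i<N. g ((i + 1) mod N)) = (\<Sum>i<N. (g i :: 'a::comm_monoid_add))"
proof -
  let ?h = "\<lambda>i. (i + 1) mod N"
  have inj: "inj_on ?h {..<N}" unfolding inj_on_def by (metis lessThan_iff mod_shift_eq)
  have img: "?h ` {..<N} = {..<N}" by (rule endo_inj_surj) (use inj assms in auto)
  have "(\<Sum>i<N. g i) = sum g (?h ` {..<N})" by (simp only: img)
  also have "\<dots> = (\<Sum>i<N. g (?h i))" by (simp only: sum.reindex[OF inj] comp_def)
  finally show ?thesis by simp
qed

lemma sec_measurable:
  assumes A: "A \<in> sets (seqZ \<Otimes>\<^sub>M bernoulliN)" and C: "C \<in> sets bernoulliN"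
  shows "(\<lambda>x. emeasure bernoulliN (Pair x -` A \<inter> C)) \<in> borel_measurable seqZ"
proof -
  interpret B: prob_space bernoulliN by (rule prob_space_bernoulliN)
  have A2: "A \<inter> (UNIV \<times> C) \<in> sets (seqZ \<Otimes>\<^sub>M bernoulliN)"
    using A C by (intro sets.Int pair_measureI) auto
  have "(\<lambda>x. emeasure bernoulliN (Pair x -` (A \<inter> (UNIV \<times> C)))) \<in> borel_measurable seqZ"
    by (rule B.measurable_emeasure_Pair[OF A2])
  moreover have "\<And>x. Pair x -` (A \<inter> (UNIV \<times> C)) = Pair x -` A \<inter> C" by auto
  ultimately show ?thesis by simp
qed

lemma sec_measurable_real:
  assumes A: "A \<in> sets (seqZ \<Otimes>\<^sub>M bernoulliN)" and C: "C \<in> sets bernoulliN"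
  shows "(\<lambda>x. measure bernoulliN (Pair x -` A \<inter> C)) \<in> borel_measurable seqZ"
  unfolding measure_def by (intro borel_measurable_enn2real sec_measurable[OF A C])

lemma T_pow_vimage:
  assumes "map_prod shiftZ odometer -` E = E"
  shows "(map_prod shiftZ odometer ^^ n) -` E = E"
proof (induction n)
  case 0 then show ?case by simp
next
  case (Suc n)
  have "(map_prod shiftZ odometer ^^ Suc n) -` E = (map_prod shiftZ odometer ^^ n) -` (map_prod shiftZ odometer -` E)"
    by (simp only: funpow.simps(2) vimage_comp)
  also have "\<dots> = E" using assms Suc.IH by simp
  finally show ?case .
qed

lemma cyl_part:
  assumes "k \<le> j"
  shows "cylA 0 k = (\<Union>s<2^(j-k). cylA (2^k * s) j)"
proof safe
  fix a assume "a \<in> cylA 0 k"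
  then have "num j a mod 2^k = 0" using num_mod[OF assms] by (simp add: cylA_num)
  then obtain s where s: "num j a = 2^k * s" by (metis mod_0_imp_dvd dvdE)
  have "2^k * s < 2^k * 2^(j-k)" using num_lt[of j a] s assms by (simp add: power_add[symmetric])
  then have "s < 2^(j-k)" by simp
  then show "a \<in> (\<Union>s<2^(j-k). cylA (2^k * s) j)" using s by (auto simp: cylA_num)
next
  fix a s assume "a \<in> cylA (2^k * s) j"
  then show "a \<in> cylA 0 k" using num_mod[OF assms, of a] by (simp add: cylA_num)
qed

lemma pow2_mul_lt: "k \<le> j \<Longrightarrow> s < 2^(j-k) \<Longrightarrow> (2::nat)^k * s < 2^j"
proof -
  assume "k \<le> j" "s < 2^(j-k)"
  then have "(2::nat)^k * s < 2^k * 2^(j-k)" by simp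
  also have "\<dots> = 2^j" using \<open>k \<le> j\<close> by (simp add: power_add[symmetric])
  finally show ?thesis .
qed



lemma backward:
  fixes k :: nat and \<eta> :: "(int \<Rightarrow> bool) measure" and E
  assumes eta: "prob_space \<eta>" "sets \<eta> = sets seqZ"
    and pres: "distr \<eta> seqZ (shiftZ ^^ (2 ^ k)) = \<eta>"
    and erg: "ergodic \<eta> (shiftZ ^^ (2 ^ (k + 1)))"
    and E: "E \<in> sets (seqZ \<Otimes>\<^sub>M bernoulliN)"
    and Einv: "map_prod shiftZ odometer -` E = E"
  shows "emeasure (periodic_type k \<eta>) E = 0 \<or> emeasure (periodic_type k \<eta>) E = 1"
proof -
  interpret P: prob_space \<eta> by (rule eta(1))
  interpret B: prob_space bernoulliN by (rule prob_space_bernoulliN)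
  have sp: "space \<eta> = UNIV" using sets_eq_imp_space_eq[OF eta(2)] by simp
  define R where "R = shiftZ ^^ (2^k)"
  have mc: "measurable \<eta> \<eta> = measurable seqZ seqZ" by (rule measurable_cong_sets[OF eta(2) eta(2)])
  have mc2: "measurable \<eta> seqZ = measurable seqZ seqZ" by (rule measurable_cong_sets[OF eta(2) refl])
  have mcb: "borel_measurable \<eta> = borel_measurable seqZ" by (rule measurable_cong_sets[OF eta(2) refl])
  have Spow_meas: "(shiftZ ^^ N) \<in> \<eta> \<rightarrow>\<^sub>M \<eta>" for N using mc shift_pow_measurable by simp
  have Rpow: "R ^^ n = shiftZ ^^ (2^k * n)" for n by (simp add: R_def funpow_mult)
  have Rmeas: "R ^^ n \<in> \<eta> \<rightarrow>\<^sub>M \<eta>" for n unfolding Rpow by (rule Spow_meas)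
  have Rmeas1: "R \<in> \<eta> \<rightarrow>\<^sub>M \<eta>" using Rmeas[of 1] by simp
  have presR: "distr \<eta> \<eta> R = \<eta>"
  proof -
    have "distr \<eta> \<eta> R = distr \<eta> seqZ R" by (rule distr_cong) (simp_all add: eta(2))
    then show ?thesis using pres by (simp add: R_def)
  qed
  have presRn: "distr \<eta> \<eta> (R ^^ n) = \<eta>" for n
  proof (induction n)
    case 0 then show ?case by (simp add: distr_id[unfolded id_def])
  next
    case (Suc n)
    have "distr \<eta> \<eta> (R ^^ Suc n) = distr (distr \<eta> \<eta> (R ^^ n)) \<eta> R"
      by (simp add: distr_distr[OF Rmeas1 Rmeas])
    then show ?case using Suc presR by (simp add: comp_def)
  qed
  have erg1: "measure \<eta> A = 0 \<or> measure \<eta> A = 1" if "A \<in> sets \<eta>" "(R ^^ 2) -` A = A" for A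
  proof -
    have "R ^^ 2 = shiftZ ^^ (2 ^ (k + 1))" unfolding Rpow by (simp add: power_add mult.commute)
    then have "(shiftZ ^^ (2 ^ (k + 1))) -` A \<inter> space \<eta> = A" using that sp by simp
    then have "emeasure \<eta> A = 0 \<or> emeasure \<eta> A = 1" using erg that unfolding ergodic_def by blast
    then show ?thesis by (simp add: P.emeasure_eq_measure)
  qed
  have ergS: "measure \<eta> A = 0 \<or> measure \<eta> A = 1"
    if "A \<in> sets \<eta>" "(R ^^ (2 ^ Suc m)) -` A = A" for m A
    using that
  proof (induction m arbitrary: A)
    case 0 then show ?case using erg1 by simp
  next
    case (Suc m)
    let ?T = "R ^^ (2 ^ m)"
    show ?case
    proof (rule erg_double[OF eta(1) sp Rmeas])
      show "distr \<eta> \<eta> ?T = \<eta>" by (rule presRn)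
      show "A \<in> sets \<eta>" by (rule Suc.prems(1))
      show "(?T ^^ 4) -` A = A" using Suc.prems(2) by (simp add: funpow_mult mult.commute)
      fix A' assume "A' \<in> sets \<eta>" "(?T ^^ 2) -` A' = A'"
      then show "measure \<eta> A' = 0 \<or> measure \<eta> A' = 1" using Suc.IH by (simp add: funpow_mult mult.commute)
    qed
  qed
  have ergm: "measure \<eta> A = 0 \<or> measure \<eta> A = 1"
    if "A \<in> sets \<eta>" "(R ^^ (2 ^ m)) -` A = A" for m A
  proof -
    have "(R ^^ (2 ^ Suc m)) = (R ^^ (2 ^ m)) ^^ 2" by (simp add: funpow_mult mult.commute)
    then have "(R ^^ (2 ^ Suc m)) -` A = (R ^^ (2 ^ m)) -` ((R ^^ (2 ^ m)) -` A)"
      by (simp add: numeral_2_eq_2 vimage_comp)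
    then have "(R ^^ (2 ^ Suc m)) -` A = A" using that by simp
    then show ?thesis using ergS that by blast
  qed
  define h where "h j r x = measure bernoulliN (Pair x -` E \<inter> cylA r j)" for j r x
  have hmeasZ: "h j r \<in> borel_measurable seqZ" for j r
    unfolding h_def[abs_def] by (rule sec_measurable_real[OF E cylA_sets])
  have hmeas: "h j r \<in> borel_measurable \<eta>" for j r unfolding mcb by (rule hmeasZ)
  have hbound: "0 \<le> h j r x" "h j r x \<le> 1" for j r x unfolding h_def by auto
  have hint: "integrable \<eta> (h j r)" for j r
    by (rule P.integrable_const_bound[where B=1]) (use hbound hmeas in auto)
  have hrel: "h j r x = h j ((r + n) mod 2^j) ((shiftZ ^^ n) x)" if "r < 2^j" for j r x n
    using section_G[OF E that, of x n] T_pow_vimage[OF Einv, of n] by (simp add: h_def measure_def)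
  define a where "a j r = integral\<^sup>L \<eta> (h j r)" for j r
  have hAE: "AE x in \<eta>. h j r x = a j r" if "k \<le> j" "r < 2^j" for j r
    unfolding a_def
  proof (rule inv_const_AE[OF eta(1) sp _ hmeas hint])
    fix x show "h j r ((shiftZ ^^ (2^j)) x) = h j r x" using hrel[OF that(2), of x "2^j"] that by simp
  next
    fix A assume "A \<in> sets \<eta>" "(shiftZ ^^ (2^j)) -` A = A"
    moreover have "shiftZ ^^ (2^j) = R ^^ (2^(j-k))" unfolding Rpow using that
      by (simp add: power_add[symmetric])
    ultimately show "measure \<eta> A = 0 \<or> measure \<eta> A = 1" using ergm by simp
  qed
  have aR: "a j r = a j ((r + 2^k) mod 2^j)" if "r < 2^j" for j r
  proof -
    have "a j r = integral\<^sup>L \<eta> (\<lambda>x. h j ((r + 2^k) mod 2^j) (R x))"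
      unfolding a_def R_def using hrel[OF that] by simp
    also have "\<dots> = integral\<^sup>L (distr \<eta> seqZ R) (h j ((r + 2^k) mod 2^j))"
      using mc2 shift_pow_measurable by (intro integral_distr[symmetric] hmeasZ) (simp add: R_def)
    also have "\<dots> = a j ((r + 2^k) mod 2^j)" using pres by (simp add: R_def a_def)
    finally show ?thesis .
  qed
  have as: "a j (2^k * s) = a j 0" if "k \<le> j" "s < 2^(j-k)" for j s
    using that(2)
  proof (induction s)
    case 0 then show ?case by simp
  next
    case (Suc s)
    then have s: "s < 2^(j-k)" by simp
    have lt: "2^k * s < 2^j" by (rule pow2_mul_lt[OF that(1) s])
    have lt2: "2^k * Suc s < 2^j" by (rule pow2_mul_lt[OF that(1) Suc.prems])
    have "a j (2^k * s) = a j ((2^k * s + 2^k) mod 2^j)" by (rule aR[OF lt])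
    also have "(2^k * s + 2^k) mod 2^j = 2^k * Suc s" using lt2 by (simp add: algebra_simps)
    finally show ?case using Suc.IH[OF s] by simp
  qed
  have AE1: "AE x in \<eta>. k \<le> j \<longrightarrow> s < 2^(j-k) \<longrightarrow> h j (2^k * s) x = a j 0" for j s
  proof (cases "k \<le> j \<and> s < 2^(j-k)")
    case True
    have "AE x in \<eta>. h j (2^k * s) x = a j (2^k * s)" using True by (intro hAE pow2_mul_lt) auto
    then show ?thesis by eventually_elim (use True as in auto)
  qed auto
  have AEall: "AE x in \<eta>. \<forall>j s. k \<le> j \<longrightarrow> s < 2^(j-k) \<longrightarrow> h j (2^k * s) x = a j 0"
    unfolding AE_all_countable using AE1 by blast
  obtain x0 where x0: "\<And>j s. k \<le> j \<Longrightarrow> s < 2^(j-k) \<Longrightarrow> h j (2^k * s) x0 = a j 0"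
  proof -
    have "\<exists>x. \<forall>j s. k \<le> j \<longrightarrow> s < 2^(j-k) \<longrightarrow> h j (2^k * s) x = a j 0"
    proof (rule ccontr)
      assume nex: "\<not> ?thesis"
      have "AE x in \<eta>. False" by (rule eventually_mono[OF AEall]) (use nex in blast)
      then show False by simp
    qed
    then show ?thesis using that by blast
  qed
  define a0 where "a0 = a k 0"
  define F where "F = Pair x0 -` E \<inter> cylA 0 k"
  have Fs: "F \<in> sets bernoulliN" unfolding F_def using sets_Pair1[OF E] cylA_sets by blast
  have Fsub: "F \<subseteq> cylA 0 k" unfolding F_def by blast
  have mF: "measure bernoulliN F = a0" using x0[of k 0] unfolding a0_def F_def h_def by simp
  have a0nn: "0 \<le> a0" using mF by auto
  have rel: "a0 = 2^(j-k) * a j 0" if "k \<le> j" for j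
  proof -
    have FU: "F = (\<Union>s<2^(j-k). Pair x0 -` E \<inter> cylA (2^k * s) j)"
      unfolding F_def cyl_part[OF that] by blast
    have "measure bernoulliN (\<Union>s<2^(j-k). Pair x0 -` E \<inter> cylA (2^k * s) j) = (\<Sum>s<2^(j-k). measure bernoulliN (Pair x0 -` E \<inter> cylA (2^k * s) j))"
    proof (rule B.finite_measure_finite_Union)
      show "finite {..<(2::nat)^(j-k)}" by simp
      show "(\<lambda>s. Pair x0 -` E \<inter> cylA (2^k * s) j) ` {..<(2::nat)^(j-k)} \<subseteq> sets bernoulliN"
        using sets_Pair1[OF E] cylA_sets by blast
      show "disjoint_family_on (\<lambda>s. Pair x0 -` E \<inter> cylA (2^k * s) j) {..<(2::nat)^(j-k)}"
        unfolding disjoint_family_on_def cylA_num by auto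
    qed
    then have "measure bernoulliN F = (\<Sum>s<2^(j-k). measure bernoulliN (Pair x0 -` E \<inter> cylA (2^k * s) j))"
      using FU by simp
    also have "\<dots> = (\<Sum>s<(2::nat)^(j-k). a j 0)"
      using x0[OF that] by (intro sum.cong refl) (simp add: h_def)
    finally show ?thesis using mF by simp
  qed
  define M1 where "M1 = density bernoulliN (indicator F)"
  define M2 where "M2 = density bernoulliN (\<lambda>\<alpha>. ennreal (2^k * a0) * indicator (cylA 0 k) \<alpha>)"
  have M2em: "emeasure M2 X = ennreal (2^k * a0) * emeasure bernoulliN (cylA 0 k \<inter> X)"
    if "X \<in> sets bernoulliN" for X
  proof -
    have "emeasure M2 X = \<integral>\<^sup>+ \<alpha>. ennreal (2^k * a0) * indicator (cylA 0 k) \<alpha> * indicator X \<alpha> \<partial>bernoulliN"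
      unfolding M2_def by (rule emeasure_density) (use that in auto)
    also have "\<dots> = \<integral>\<^sup>+ \<alpha>. ennreal (2^k * a0) * indicator (cylA 0 k \<inter> X) \<alpha> \<partial>bernoulliN"
      by (intro nn_integral_cong) (simp add: indicator_inter_arith mult.assoc)
    also have "\<dots> = ennreal (2^k * a0) * emeasure bernoulliN (cylA 0 k \<inter> X)"
      using that by (intro nn_integral_cmult_indicator) auto
    finally show ?thesis .
  qed
  have M1em: "emeasure M1 X = emeasure bernoulliN (F \<inter> X)" if "X \<in> sets bernoulliN" for X
    unfolding M1_def by (rule emeasure_restricted[OF Fs that])
  have M12: "M1 = M2"
  proof (rule measure_eqI_generator_eq[OF Gen_Int_stable[of k], where \<Omega>=UNIV and A="\<lambda>i. cylA (i mod 2^k) k"])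
    show "Gen k \<subseteq> Pow UNIV" by simp
    show "sets M1 = sigma_sets UNIV (Gen k)" unfolding M1_def by (simp add: sets_bernoulliN_Gen[of k])
    show "sets M2 = sigma_sets UNIV (Gen k)" unfolding M2_def by (simp add: sets_bernoulliN_Gen[of k])
    show "range (\<lambda>i. cylA (i mod 2^k) k) \<subseteq> Gen k" unfolding Gen_def by blast
    show "(\<Union>i. cylA (i mod 2^k) k) = UNIV"
    proof -
      have "\<alpha> \<in> cylA (num k \<alpha> mod 2^k) k" for \<alpha> using num_lt[of k \<alpha>] by (simp add: cylA_num)
      then show ?thesis by blast
    qed
    show "emeasure M1 (cylA (i mod 2^k) k) \<noteq> \<infinity>" for i
      using M1em[OF cylA_sets] B.emeasure_finite by simp
  next
    fix X assume "X \<in> Gen k"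
    then obtain r j where X: "X = cylA r j" and kj: "k \<le> j" unfolding Gen_def by blast
    show "emeasure M1 X = emeasure M2 X"
    proof (cases "r < 2^j \<and> r mod 2^k = 0")
      case False
      have "cylA 0 k \<inter> X = {}"
        using False num_mod[OF kj] num_lt[of j] unfolding X cylA_num by fastforce
      moreover then have "F \<inter> X = {}" using Fsub by blast
      ultimately show ?thesis using M1em[of X] M2em[of X] X cylA_sets by simp
    next
      case True
      define s where "s = r div 2^k"
      have r: "r = 2^k * s" using True div_mult_mod_eq[of r "2^k"] unfolding s_def by (simp add: mult.commute)
      have "2^k * s < 2^k * 2^(j-k)" using True r kj by (simp add: power_add[symmetric])
      then have s: "s < 2^(j-k)" by simp
      have Xsub: "X \<subseteq> cylA 0 k" unfolding X r cyl_part[OF kj] using s by blast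
      have XX: "cylA 0 k \<inter> X = X" using Xsub by blast
      have "emeasure M1 X = emeasure bernoulliN (Pair x0 -` E \<inter> X)"
        using M1em[of X] X cylA_sets XX unfolding F_def by (simp add: Int_assoc)
      also have "\<dots> = ennreal (a j 0)"
        using x0[OF kj s] unfolding h_def X r by (simp add: B.emeasure_eq_measure)
      also have "\<dots> = ennreal (2^k * a0) * ennreal ((1/2)^j)"
      proof -
        have "(2::real)^k * a0 * (1/2)^j = 2^k * 2^(j-k) * (1/2)^j * a j 0" using rel[OF kj] by simp
        also have "(2::real)^k * 2^(j-k) = 2^j" using kj by (simp add: power_add[symmetric])
        finally have "(2::real)^k * a0 * (1/2)^j = a j 0" by (simp add: power_divide)
        then show ?thesis using a0nn by (simp add: ennreal_mult[symmetric])
      qed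
      also have "\<dots> = emeasure M2 X"
        using M2em[of X] X cylA_sets XX True by (simp add: emeasure_cylA)
      finally show ?thesis .
    qed
  qed
  have "ennreal a0 = ennreal (2^k * a0) * ennreal a0"
  proof -
    have "emeasure M1 F = emeasure M2 F" using M12 by simp
    moreover have "emeasure M1 F = ennreal a0" using M1em[OF Fs] mF by (simp add: B.emeasure_eq_measure)
    moreover have "emeasure M2 F = ennreal (2^k * a0) * ennreal a0"
      using M2em[OF Fs] Fsub mF by (simp add: Int_absorb1 B.emeasure_eq_measure)
    ultimately show ?thesis by simp
  qed
  then have "a0 = 2^k * a0 * a0" using a0nn by (simp add: ennreal_mult[symmetric] ennreal_inj)
  then have a0cases: "a0 = 0 \<or> 2^k * a0 = 1"
    by (metis mult_cancel_right1 mult.commute mult_zero_left mult.assoc)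
  have "emeasure (periodic_type k \<eta>) E =
    (\<Sum>i<2^k. \<integral>\<^sup>+ y. emeasure bernoulliN (Pair ((shiftZ ^^ i) y) -` E \<inter> cylA i k) \<partial>\<eta>)"
    by (rule D_emeasure[OF eta E])
  also have "\<dots> = (\<Sum>i<(2::nat)^k. ennreal a0)"
  proof (intro sum.cong refl)
    fix i assume "i \<in> {..<(2::nat)^k}"
    then have i: "i < 2^k" by simp
    have "(\<integral>\<^sup>+ y. emeasure bernoulliN (Pair ((shiftZ ^^ i) y) -` E \<inter> cylA i k) \<partial>\<eta>)
        = (\<integral>\<^sup>+ y. ennreal (h k 0 y) \<partial>\<eta>)"
    proof (intro nn_integral_cong)
      fix y
      have "h k 0 y = h k i ((shiftZ ^^ i) y)" using hrel[of 0 k y i] i by simp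
      then show "emeasure bernoulliN (Pair ((shiftZ ^^ i) y) -` E \<inter> cylA i k) = ennreal (h k 0 y)"
        by (simp add: h_def B.emeasure_eq_measure)
    qed
    also have "\<dots> = ennreal a0" unfolding a0_def a_def
      by (rule nn_integral_eq_integral[OF hint]) (use hbound in auto)
    finally show "(\<integral>\<^sup>+ y. emeasure bernoulliN (Pair ((shiftZ ^^ i) y) -` E \<inter> cylA i k) \<partial>\<eta>) = ennreal a0" .
  qed
  also have "\<dots> = ennreal (2^k * a0)" using a0nn by (simp add: ennreal_mult ennreal_power[symmetric])
  finally show ?thesis using a0cases by auto
qed



lemma T_meas_prod: "map_prod shiftZ odometer \<in> (seqZ \<Otimes>\<^sub>M bernoulliN) \<rightarrow>\<^sub>M (seqZ \<Otimes>\<^sub>M bernoulliN)"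
proof -
  have "(\<lambda>p. (shiftZ (fst p), odometer (snd p))) \<in> (seqZ \<Otimes>\<^sub>M bernoulliN) \<rightarrow>\<^sub>M (seqZ \<Otimes>\<^sub>M bernoulliN)"
    by measurable
  moreover have "map_prod shiftZ odometer = (\<lambda>p. (shiftZ (fst p), odometer (snd p)))"
    by (rule ext) (simp add: map_prod_def split_beta)
  ultimately show ?thesis by simp
qed

lemma T_meas: "map_prod shiftZ odometer \<in> periodic_type k \<eta> \<rightarrow>\<^sub>M periodic_type k \<eta>"
  using T_meas_prod measurable_cong_sets[OF sets_prodD sets_prodD] by blast

lemma D_pres:
  assumes eta: "prob_space \<eta>" "sets \<eta> = sets seqZ"
    and pres: "distr \<eta> seqZ (shiftZ ^^ (2 ^ k)) = \<eta>"
  shows "distr (periodic_type k \<eta>) (periodic_type k \<eta>) (map_prod shiftZ odometer) = periodic_type k \<eta>"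
proof (rule measure_eqI)
  show "sets (distr (periodic_type k \<eta>) (periodic_type k \<eta>) (map_prod shiftZ odometer)) = sets (periodic_type k \<eta>)"
    by simp
  fix A assume "A \<in> sets (distr (periodic_type k \<eta>) (periodic_type k \<eta>) (map_prod shiftZ odometer))"
  then have A: "A \<in> sets (seqZ \<Otimes>\<^sub>M bernoulliN)" by simp
  define N :: nat where "N = 2^k"
  have N0: "0 < N" by (simp add: N_def)
  define t where "t i = (\<integral>\<^sup>+ y. emeasure bernoulliN (Pair ((shiftZ ^^ i) y) -` A \<inter> cylA (i mod N) k) \<partial>\<eta>)" for i
  have TA: "map_prod shiftZ odometer -` A \<in> sets (seqZ \<Otimes>\<^sub>M bernoulliN)"
    using measurable_sets[OF T_meas_prod A] by simp
  have "emeasure (distr (periodic_type k \<eta>) (periodic_type k \<eta>) (map_prod shiftZ odometer)) A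
      = emeasure (periodic_type k \<eta>) (map_prod shiftZ odometer -` A)"
    using A by (subst emeasure_distr[OF T_meas]) auto
  also have "\<dots> = (\<Sum>i<N. \<integral>\<^sup>+ y. emeasure bernoulliN (Pair ((shiftZ ^^ i) y) -` (map_prod shiftZ odometer -` A) \<inter> cylA i k) \<partial>\<eta>)"
    unfolding N_def by (rule D_emeasure[OF eta TA])
  also have "\<dots> = (\<Sum>i<N. t (Suc i))"
  proof (intro sum.cong refl)
    fix i assume "i \<in> {..<N}"
    then have i: "i < 2^k" by (simp add: N_def)
    show "(\<integral>\<^sup>+ y. emeasure bernoulliN (Pair ((shiftZ ^^ i) y) -` (map_prod shiftZ odometer -` A) \<inter> cylA i k) \<partial>\<eta>) = t (Suc i)"
      unfolding t_def
    proof (intro nn_integral_cong)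
      fix y
      show "emeasure bernoulliN (Pair ((shiftZ ^^ i) y) -` (map_prod shiftZ odometer -` A) \<inter> cylA i k)
          = emeasure bernoulliN (Pair ((shiftZ ^^ Suc i) y) -` A \<inter> cylA (Suc i mod N) k)"
        using section_G[OF A i, of "(shiftZ ^^ i) y" 1] by (simp add: N_def)
    qed
  qed
  also have "\<dots> = (\<Sum>i<N. t ((i + 1) mod N))"
  proof (intro sum.cong refl)
    fix i assume "i \<in> {..<N}"
    show "t (Suc i) = t ((i + 1) mod N)"
    proof (cases "Suc i < N")
      case True then show ?thesis by simp
    next
      case False
      then have iN: "Suc i = N" using \<open>i \<in> {..<N}\<close> by simp
      have f: "(\<lambda>x. emeasure bernoulliN (Pair x -` A \<inter> cylA 0 k)) \<in> borel_measurable seqZ"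
        by (rule sec_measurable[OF A cylA_sets])
      have "t N = (\<integral>\<^sup>+ y. emeasure bernoulliN (Pair ((shiftZ ^^ (2^k)) y) -` A \<inter> cylA 0 k) \<partial>\<eta>)"
        by (simp add: t_def N_def)
      also have "\<dots> = (\<integral>\<^sup>+ x. emeasure bernoulliN (Pair x -` A \<inter> cylA 0 k) \<partial>(distr \<eta> seqZ (shiftZ ^^ (2^k))))"
      proof (rule nn_integral_distr[symmetric])
        show "shiftZ ^^ (2^k) \<in> \<eta> \<rightarrow>\<^sub>M seqZ"
          using measurable_cong_sets[OF eta(2) refl] shift_pow_measurable by blast
        show "(\<lambda>x. emeasure bernoulliN (Pair x -` A \<inter> cylA 0 k)) \<in> borel_measurable (distr \<eta> seqZ (shiftZ ^^ (2^k)))"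
          using f measurable_cong_sets[of "distr \<eta> seqZ (shiftZ ^^ (2^k))" seqZ borel borel] by simp
      qed
      also have "\<dots> = t 0" using pres by (simp add: t_def)
      finally show ?thesis using iN by simp
    qed
  qed
  also have "\<dots> = (\<Sum>i<N. t i)" by (rule sum_cyc[OF N0])
  also have "\<dots> = emeasure (periodic_type k \<eta>) A"
    unfolding D_emeasure[OF eta A] N_def[symmetric] t_def by (intro sum.cong refl) simp
  finally show "emeasure (distr (periodic_type k \<eta>) (periodic_type k \<eta>) (map_prod shiftZ odometer)) A = emeasure (periodic_type k \<eta>) A" .
qed



lemma unshift_Suc_shift: "unshift (Suc u) (shiftZ x) = unshift u x"
  by (rule ext) (simp add: unshift_def shiftZ_def algebra_simps)

lemma unshift_0[simp]: "unshift 0 x = x"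
  by (simp add: unshift_def)

lemma shift_R_unshift: "(shiftZ ^^ (2^k)) (unshift (2^k - 1) x) = shiftZ x"
proof -
  have "int (2^k - 1) = 2^k - 1" by (simp add: of_nat_diff)
  then show ?thesis by (simp add: shift_pow unshift_def shiftZ_def algebra_simps fun_eq_iff)
qed

lemma odo_k:
  "num (Suc k) (odometer a) = (num (Suc k) a + 1) mod 2 ^ Suc k"
  by (rule num_odometer)

lemma odo_step:
  assumes "num k a + 1 < 2^k"
  shows "num k (odometer a) = num k a + 1 \<and> odometer a k = a k"
proof -
  have e1: "num k (odometer a) = num k a + 1" using num_odometer[of k a] assms by simp
  have lt: "num k a + (if a k then 2^k else 0) + 1 < 2 ^ Suc k" using assms by auto
  have "num k (odometer a) + (if odometer a k then 2^k else 0) = num k a + (if a k then 2^k else 0) + 1"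
    using odo_k[of k a] lt by (simp add: num_Suc)
  then have "(if odometer a k then (2::nat)^k else 0) = (if a k then 2^k else 0)" using e1 by simp
  then show ?thesis using e1 by (auto split: if_splits)
qed

lemma odo_wrap:
  assumes "num k a + 1 = 2^k"
  shows "num k (odometer a) = 0 \<and> odometer a k = (\<not> a k)"
proof -
  have e1: "num k (odometer a) = 0" using num_odometer[of k a] assms by simp
  have m0: "num k a + (if a k then 2^k else 0) + 1 = (if a k then 2 ^ Suc k else 2^k)"
    using assms by auto
  have m: "(num k a + (if a k then 2^k else 0) + 1) mod 2 ^ Suc k = (if a k then 0 else 2^k)"
    unfolding m0 by auto
  have "num k (odometer a) + (if odometer a k then 2^k else 0) = (if a k then 0 else 2^k)"
    using odo_k[of k a] m by (simp add: num_Suc)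
  then have "(if odometer a k then (2::nat)^k else 0) = (if a k then 0 else 2^k)" using e1 by auto
  then show ?thesis using e1 by (auto split: if_splits)
qed

lemma numSuc0: "i < 2^k \<Longrightarrow> (num (Suc k) a = i) = (num k a = i \<and> \<not> a k)"
  using num_lt[of k a] by (auto simp: num_Suc)

lemma numSuc1: "i < 2^k \<Longrightarrow> (num (Suc k) a = i + 2^k) = (num k a = i \<and> a k)"
  using num_lt[of k a] by (auto simp: num_Suc)

lemma cylSuc0: assumes "i < 2^k" shows "cylA i (Suc k) = {a. num k a = i \<and> \<not> a k}"
  unfolding cylA_num using numSuc0[OF assms] by simp

lemma cylSuc1: assumes "i < 2^k" shows "cylA (i + 2^k) (Suc k) = {a. num k a = i \<and> a k}"
  unfolding cylA_num using numSuc1[OF assms] by simp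

lemma forward:
  fixes k :: nat and \<eta> :: "(int \<Rightarrow> bool) measure"
  assumes eta: "prob_space \<eta>" "sets \<eta> = sets seqZ"
    and pres: "distr \<eta> seqZ (shiftZ ^^ (2 ^ k)) = \<eta>"
    and ergD: "ergodic (periodic_type k \<eta>) (map_prod shiftZ odometer)"
  shows "ergodic \<eta> (shiftZ ^^ (2 ^ (k + 1)))"
proof -
  interpret P: prob_space \<eta> by (rule eta(1))
  interpret B: prob_space bernoulliN by (rule prob_space_bernoulliN)
  have sp: "space \<eta> = UNIV" using sets_eq_imp_space_eq[OF eta(2)] by simp
  define R where "R = shiftZ ^^ (2^k)"
  have mc: "measurable \<eta> \<eta> = measurable seqZ seqZ" by (rule measurable_cong_sets[OF eta(2) eta(2)])
  have Rm: "R \<in> \<eta> \<rightarrow>\<^sub>M \<eta>" using mc shift_pow_measurable by (simp add: R_def)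
  have RR: "shiftZ ^^ (2 ^ (k + 1)) = R \<circ> R" by (simp add: R_def funpow_add[symmetric] mult_2)
  have presR: "distr \<eta> \<eta> R = \<eta>"
  proof -
    have "distr \<eta> \<eta> R = distr \<eta> seqZ R" by (rule distr_cong) (simp_all add: eta(2))
    then show ?thesis using pres by (simp add: R_def)
  qed
  have m2: "shiftZ ^^ (2 ^ (k + 1)) \<in> \<eta> \<rightarrow>\<^sub>M \<eta>" using mc shift_pow_measurable by simp
  have p2: "distr \<eta> \<eta> (shiftZ ^^ (2 ^ (k + 1))) = \<eta>"
    unfolding RR using distr_distr[OF Rm Rm] presR by simp
  have inv: "emeasure \<eta> A = 0 \<or> emeasure \<eta> A = 1"
    if As: "A \<in> sets \<eta>" and Ai: "(shiftZ ^^ (2 ^ (k + 1))) -` A \<inter> space \<eta> = A" for A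
  proof -
    have AsZ: "A \<in> sets seqZ" using As eta(2) by simp
    have AR: "R (R y) \<in> A \<longleftrightarrow> y \<in> A" for y using Ai unfolding RR sp by auto
    define B1 where "B1 = R -` A"
    have B1s: "B1 \<in> sets seqZ" using measurable_sets[OF shift_pow_measurable AsZ] by (simp add: B1_def R_def)
    have unA: "unshift u -` X \<in> sets seqZ" if "X \<in> sets seqZ" for u X
      using measurable_sets[OF unshift_measurable that] by simp
    define E where "E = {(x, a). unshift (num k a) x \<in> (if a k then B1 else A)}"
    have Eu: "E = (\<Union>u<2^k. ((unshift u -` A) \<times> cylA u (Suc k)) \<union> ((unshift u -` B1) \<times> cylA (u + 2^k) (Suc k)))"
    proof (intro set_eqI)
      fix p :: "(int \<Rightarrow> bool) \<times> (nat \<Rightarrow> bool)"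
      obtain x a where p: "p = (x, a)" by (cases p)
      have lt: "num k a < 2^k" by (rule num_lt)
      have c0: "a \<in> cylA u (Suc k) \<longleftrightarrow> num k a = u \<and> \<not> a k" if "u < 2^k" for u
        using cylSuc0[OF that] by blast
      have c1: "a \<in> cylA (u + 2^k) (Suc k) \<longleftrightarrow> num k a = u \<and> a k" if "u < 2^k" for u
        using cylSuc1[OF that] by blast
      show "p \<in> E \<longleftrightarrow> p \<in> (\<Union>u<2^k. ((unshift u -` A) \<times> cylA u (Suc k)) \<union> ((unshift u -` B1) \<times> cylA (u + 2^k) (Suc k)))"
      proof
        assume "p \<in> E"
        then have h: "unshift (num k a) x \<in> (if a k then B1 else A)" by (simp add: p E_def)
        show "p \<in> (\<Union>u<2^k. ((unshift u -` A) \<times> cylA u (Suc k)) \<union> ((unshift u -` B1) \<times> cylA (u + 2^k) (Suc k)))"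
          unfolding p
        proof (rule UN_I[of "num k a"])
          show "num k a \<in> {..<2^k}" using lt by simp
          show "(x, a) \<in> ((unshift (num k a) -` A) \<times> cylA (num k a) (Suc k)) \<union> ((unshift (num k a) -` B1) \<times> cylA (num k a + 2^k) (Suc k))"
            using h c0[OF lt] c1[OF lt] by (cases "a k") auto
        qed
      next
        assume "p \<in> (\<Union>u<2^k. ((unshift u -` A) \<times> cylA u (Suc k)) \<union> ((unshift u -` B1) \<times> cylA (u + 2^k) (Suc k)))"
        then obtain u where u: "u < 2^k" and
          h: "(x, a) \<in> ((unshift u -` A) \<times> cylA u (Suc k)) \<union> ((unshift u -` B1) \<times> cylA (u + 2^k) (Suc k))"
          unfolding p by blast
        show "p \<in> E" using h c0[OF u] c1[OF u] unfolding p E_def by auto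
      qed
    qed
    have Es: "E \<in> sets (seqZ \<Otimes>\<^sub>M bernoulliN)"
      unfolding Eu using unA[OF AsZ] unA[OF B1s]
      by (intro sets.finite_UN sets.Un pair_measureI) (auto simp: cylA_sets)
    have Einv: "map_prod shiftZ odometer -` E = E"
    proof (intro set_eqI)
      fix p :: "(int \<Rightarrow> bool) \<times> (nat \<Rightarrow> bool)"
      obtain x a where p: "p = (x, a)" by (cases p)
      have lt: "num k a < 2^k" by (rule num_lt)
      show "p \<in> map_prod shiftZ odometer -` E \<longleftrightarrow> p \<in> E"
      proof (cases "num k a + 1 < 2^k")
        case True
        note o = odo_step[OF True]
        have n1: "num k (odometer a) = Suc (num k a)" and b1: "odometer a k = a k" using o by auto
        show ?thesis unfolding p E_def by (simp add: n1 b1 unshift_Suc_shift)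
      next
        case False
        then have w: "num k a + 1 = 2^k" using lt by simp
        note o = odo_wrap[OF w]
        have n1: "num k (odometer a) = 0" and b1: "odometer a k = (\<not> a k)" using o by auto
        have u: "num k a = 2^k - 1" using w by simp
        have Sx: "shiftZ x = R (unshift (num k a) x)" unfolding u R_def by (rule shift_R_unshift[symmetric])
        show ?thesis
          unfolding p E_def using AR[of "unshift (num k a) x"] by (simp add: n1 b1 Sx B1_def)
      qed
    qed
    have c_def': "emeasure bernoulliN (cylA i (Suc k)) = ennreal ((1/2)^(Suc k))"
      "emeasure bernoulliN (cylA (i + 2^k) (Suc k)) = ennreal ((1/2)^(Suc k))" if "i < 2^k" for i
      using that by (simp_all add: emeasure_cylA)
    define c where "c = ennreal ((1/2)^(Suc k))"
    have sec: "emeasure bernoulliN (Pair ((shiftZ ^^ i) y) -` E \<inter> cylA i k)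
        = c * indicator A y + c * indicator B1 y" if i: "i < 2^k" for i y
    proof -
      have "Pair ((shiftZ ^^ i) y) -` E \<inter> cylA i k
          = (if y \<in> A then cylA i (Suc k) else {}) \<union> (if y \<in> B1 then cylA (i + 2^k) (Suc k) else {})"
      proof (intro set_eqI)
        fix a
        have "a \<in> Pair ((shiftZ ^^ i) y) -` E \<inter> cylA i k \<longleftrightarrow> num k a = i \<and> y \<in> (if a k then B1 else A)"
          unfolding E_def cylA_num by auto
        moreover have "a \<in> (if y \<in> A then cylA i (Suc k) else {}) \<union> (if y \<in> B1 then cylA (i + 2^k) (Suc k) else {})
           \<longleftrightarrow> (y \<in> A \<and> num k a = i \<and> \<not> a k) \<or> (y \<in> B1 \<and> num k a = i \<and> a k)"
          unfolding cylSuc0[OF i] cylSuc1[OF i] by auto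
        ultimately show "a \<in> Pair ((shiftZ ^^ i) y) -` E \<inter> cylA i k \<longleftrightarrow> a \<in> (if y \<in> A then cylA i (Suc k) else {}) \<union> (if y \<in> B1 then cylA (i + 2^k) (Suc k) else {})"
          by (cases "a k") auto
      qed
      moreover have "cylA i (Suc k) \<inter> cylA (i + 2^k) (Suc k) = {}" unfolding cylA_num by auto
      ultimately show ?thesis
        using c_def'[OF i] plus_emeasure[OF cylA_sets cylA_sets, of i "Suc k" "i + 2^k" "Suc k"]
        by (auto simp: c_def)
    qed
    have B1m: "emeasure \<eta> B1 = emeasure \<eta> A"
    proof -
      have "emeasure (distr \<eta> seqZ R) A = emeasure \<eta> (R -` A \<inter> space \<eta>)"
      proof (rule emeasure_distr[OF _ AsZ])
        show "R \<in> \<eta> \<rightarrow>\<^sub>M seqZ" using measurable_cong_sets[OF eta(2) refl] shift_pow_measurable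
          unfolding R_def by blast
      qed
      then show ?thesis using pres sp by (simp add: B1_def R_def)
    qed
    have As': "A \<in> sets \<eta>" "B1 \<in> sets \<eta>" using AsZ B1s eta(2) by auto
    have "emeasure (periodic_type k \<eta>) E =
      (\<Sum>i<2^k. \<integral>\<^sup>+ y. emeasure bernoulliN (Pair ((shiftZ ^^ i) y) -` E \<inter> cylA i k) \<partial>\<eta>)"
      by (rule D_emeasure[OF eta Es])
    also have "\<dots> = (\<Sum>i<(2::nat)^k. c * emeasure \<eta> A + c * emeasure \<eta> A)"
    proof (intro sum.cong refl)
      fix i assume "i \<in> {..<(2::nat)^k}"
      then have i: "i < 2^k" by simp
      have "(\<integral>\<^sup>+ y. emeasure bernoulliN (Pair ((shiftZ ^^ i) y) -` E \<inter> cylA i k) \<partial>\<eta>)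
          = (\<integral>\<^sup>+ y. c * indicator A y + c * indicator B1 y \<partial>\<eta>)"
        using sec[OF i] by simp
      also have "\<dots> = (\<integral>\<^sup>+ y. c * indicator A y \<partial>\<eta>) + (\<integral>\<^sup>+ y. c * indicator B1 y \<partial>\<eta>)"
        using As' by (intro nn_integral_add) auto
      also have "\<dots> = c * emeasure \<eta> A + c * emeasure \<eta> A"
        using As' B1m by (simp add: nn_integral_cmult_indicator)
      finally show "(\<integral>\<^sup>+ y. emeasure bernoulliN (Pair ((shiftZ ^^ i) y) -` E \<inter> cylA i k) \<partial>\<eta>)
          = c * emeasure \<eta> A + c * emeasure \<eta> A" .
    qed
    also have "\<dots> = (of_nat (2^k) * (c + c)) * emeasure \<eta> A"
      by (simp add: distrib_right mult.assoc)
    also have "of_nat (2^k) * (c + c) = 1"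
    proof -
      have "c + c = ennreal ((1/2)^k)" unfolding c_def by (simp flip: ennreal_plus)
      moreover have "(of_nat (2^k) :: ennreal) = ennreal (2^k)" by (simp add: ennreal_of_nat_eq_real_of_nat)
      ultimately have "of_nat (2^k) * (c + c) = ennreal (2^k * (1/2)^k)" by (simp add: ennreal_mult)
      also have "(2::real)^k * (1/2)^k = 1" by (simp add: power_mult_distrib[symmetric])
      finally show ?thesis by simp
    qed
    finally have DE: "emeasure (periodic_type k \<eta>) E = emeasure \<eta> A" by simp
    have "map_prod shiftZ odometer -` E \<inter> space (periodic_type k \<eta>) = E" using Einv by simp
    moreover have "E \<in> sets (periodic_type k \<eta>)" using Es by simp
    ultimately have "emeasure (periodic_type k \<eta>) E = 0 \<or> emeasure (periodic_type k \<eta>) E = 1"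
      using ergD unfolding ergodic_def by blast
    then show ?thesis using DE by simp
  qed
  show ?thesis unfolding ergodic_def using m2 p2 inv by blast
qed


theorem lemma5:
  fixes k :: nat and \<eta> :: "(int \<Rightarrow> bool) measure"
  assumes "prob_space \<eta>"
    and "sets \<eta> = sets seqZ"
    and "distr \<eta> seqZ (shiftZ ^^ (2 ^ k)) = \<eta>"
  shows "ergodic (periodic_type k \<eta>) (map_prod shiftZ odometer)
         \<longleftrightarrow> ergodic \<eta> (shiftZ ^^ (2 ^ (k + 1)))"
proof
  assume "ergodic (periodic_type k \<eta>) (map_prod shiftZ odometer)"
  then show "ergodic \<eta> (shiftZ ^^ (2 ^ (k + 1)))" by (rule forward[OF assms])
next
  assume erg: "ergodic \<eta> (shiftZ ^^ (2 ^ (k + 1)))"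
  show "ergodic (periodic_type k \<eta>) (map_prod shiftZ odometer)"
    unfolding ergodic_def
  proof (intro conjI ballI impI)
    show "map_prod shiftZ odometer \<in> periodic_type k \<eta> \<rightarrow>\<^sub>M periodic_type k \<eta>" by (rule T_meas)
    show "distr (periodic_type k \<eta>) (periodic_type k \<eta>) (map_prod shiftZ odometer) = periodic_type k \<eta>"
      by (rule D_pres[OF assms])
    fix A assume A: "A \<in> sets (periodic_type k \<eta>)" "map_prod shiftZ odometer -` A \<inter> space (periodic_type k \<eta>) = A"
    then show "emeasure (periodic_type k \<eta>) A = 0 \<or> emeasure (periodic_type k \<eta>) A = 1"
      using backward[OF assms(1,2,3) erg, of A] by simp
  qed
qed

end
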